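(* Let $K=\mathbb{F}_q$, $S=K[t_1,\ldots,t_s]$, and let $\mathcal{X}=[A_1\times\cdots\times A_s]\subset\mathbb{P}^{s-1}$ be a projective nested cartesian set with $d_i=|A_i|$. Then $\delta_{\mathcal{X}}(1)=d_2\cdots d_s$.
   Context: Projective nested cartesian set: for subsets $A_1,\ldots,A_s$ of $K$, $\mathcal{X}=[A_1\times\cdots\times A_s]$ is the image of $(A_1\times\cdots\times A_s)\setminus\{0\}$ under $K^s\setminus\{0\}\to\mathbb{P}^{s-1}$, $x\mapsto[x]$, and it is required that (i) $\{0,1\}\subset A_i$ for all $i$; (ii) $a/b\in A_j$ whenever $1\leq i<j\leq s$, $a\in A_j$, $0\neq b\in A_i$; (iii) $d_1\leq\cdots\leq d_s$ where $d_i=|A_i|$. $I(\mathcal{X})$ is the vanishing ideal of $\mathcal{X}$ and $V_{\mathcal{X}}(f)$ the zero set in $\mathcal{X}$ of a form $f$. $\delta_{\mathcal{X}}(d)=\min\{|\mathcal{X}|-|V_{\mathcal{X}}(f)|: f\in S_d,\ f\notin I(\mathcal{X})\}$ is the minimum distance of the degree-$d$ projective Reed–Muller-type code on $\mathcal{X}$. *)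

theory Defs
  imports Main
begin

text \<open>Vectors of \<open>K^s\<close> are functions \<open>nat \<Rightarrow> 'a\<close> vanishing outside \<open>{0..<s}\<close>;
  coordinate \<open>i\<close> (0-based) corresponds to \<open>t_(i+1)\<close> of the paper.\<close>

definition proj_point :: "(nat \<Rightarrow> ('a::field)) \<Rightarrow> (nat \<Rightarrow> 'a) set" where
  "proj_point x = {(\<lambda>i. c * x i) | c. c \<noteq> 0}"

definition proj_cart_set :: "nat \<Rightarrow> (nat \<Rightarrow> ('a::field) set) \<Rightarrow> (nat \<Rightarrow> 'a) set set" where
  "proj_cart_set s A =
     proj_point ` {x. (\<forall>i<s. x i \<in> A i) \<and> (\<forall>i\<ge>s. x i = 0) \<and> x \<noteq> (\<lambda>i. 0)}"

definition proj_nested_cartesian :: "nat \<Rightarrow> (nat \<Rightarrow> ('a::field) set) \<Rightarrow> bool" where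
  "proj_nested_cartesian s A \<longleftrightarrow>
     (\<forall>i<s. {0, 1} \<subseteq> A i) \<and>
     (\<forall>i j. i < j \<and> j < s \<longrightarrow> (\<forall>a\<in>A j. \<forall>b\<in>A i. b \<noteq> 0 \<longrightarrow> a / b \<in> A j)) \<and>
     (\<forall>i j. i \<le> j \<and> j < s \<longrightarrow> card (A i) \<le> card (A j))"

text \<open>A form of degree 1 in \<open>S = K[t_1,\<dots>,t_s]\<close> is a linear form \<open>\<Sum>i<s. c_i t_(i+1)\<close>,
  given by its coefficient function \<open>c\<close>.\<close>
definition lin_eval :: "nat \<Rightarrow> (nat \<Rightarrow> ('a::field)) \<Rightarrow> (nat \<Rightarrow> 'a) \<Rightarrow> 'a" where
  "lin_eval s c x = (\<Sum>i<s. c i * x i)"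

definition zero_set_lin :: "nat \<Rightarrow> (nat \<Rightarrow> 'a) set set \<Rightarrow> (nat \<Rightarrow> ('a::field)) \<Rightarrow> (nat \<Rightarrow> 'a) set set" where
  "zero_set_lin s X c = {P \<in> X. \<forall>x\<in>P. lin_eval s c x = 0}"

definition in_vanishing_ideal_lin :: "nat \<Rightarrow> (nat \<Rightarrow> 'a) set set \<Rightarrow> (nat \<Rightarrow> ('a::field)) \<Rightarrow> bool" where
  "in_vanishing_ideal_lin s X c \<longleftrightarrow> (\<forall>P\<in>X. \<forall>x\<in>P. lin_eval s c x = 0)"

definition delta1 :: "nat \<Rightarrow> (nat \<Rightarrow> 'a) set set \<Rightarrow> ('a::field) itself \<Rightarrow> nat" where
  "delta1 s X _ = Min {card X - card (zero_set_lin s X c) | c :: nat \<Rightarrow> 'a.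
                          \<not> in_vanishing_ideal_lin s X c}"

end

theory Submission
  imports Defs
begin

definition nrm :: "nat \<Rightarrow> (nat \<Rightarrow> ('a::field) set) \<Rightarrow> (nat \<Rightarrow> 'a) set" where
  "nrm k A = {x. \<exists>p<k. (\<forall>j<p. x j = 0) \<and> x p = 1 \<and> (\<forall>j. p < j \<and> j < k \<longrightarrow> x j \<in> A j)
                  \<and> (\<forall>j\<ge>k. x j = 0)}"

definition ev :: "nat \<Rightarrow> nat \<Rightarrow> 'a::field" where
  "ev k = (\<lambda>i. if i = k then 1 else 0)"

lemma nrm_0: "nrm 0 A = {}"
  by (auto simp: nrm_def)

lemma nrm_vanish: "x \<in> nrm k A \<Longrightarrow> k \<le> j \<Longrightarrow> x j = 0"
  by (auto simp: nrm_def)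

lemma nrm_Suc: "nrm (Suc k) A = (\<lambda>(x,a). x(k:=a)) ` (nrm k A \<times> A k) \<union> {ev k}"
proof (intro equalityI subsetI)
  fix x assume "x \<in> nrm (Suc k) A"
  then obtain p where p: "p < Suc k" "\<forall>j<p. x j = 0" "x p = 1"
    "\<forall>j. p < j \<and> j < Suc k \<longrightarrow> x j \<in> A j" "\<forall>j\<ge>Suc k. x j = 0"
    unfolding nrm_def by blast
  show "x \<in> (\<lambda>(x,a). x(k:=a)) ` (nrm k A \<times> A k) \<union> {ev k}"
  proof (cases "p = k")
    case True
    then have "x = ev k" using p by (auto simp: ev_def fun_eq_iff) (metis le_less_Suc_eq not_less)
    then show ?thesis by simp
  next
    case False
    then have pk: "p < k" using p by simp
    have "x(k:=0) \<in> nrm k A" unfolding nrm_def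
      using p pk by (intro CollectI exI[of _ p]) auto
    moreover have "x k \<in> A k" using p pk by auto
    moreover have "x = (x(k:=0))(k := x k)" by simp
    ultimately show ?thesis by (metis (no_types, lifting) SigmaI UnI1 case_prod_conv image_eqI)
  qed
next
  fix x assume "x \<in> (\<lambda>(x,a). x(k:=a)) ` (nrm k A \<times> A k) \<union> {ev k}"
  then show "x \<in> nrm (Suc k) A"
  proof
    assume "x \<in> {ev k}"
    then show ?thesis unfolding nrm_def ev_def by (intro CollectI exI[of _ k]) auto
  next
    assume "x \<in> (\<lambda>(x,a). x(k:=a)) ` (nrm k A \<times> A k)"
    then obtain y a where y: "y \<in> nrm k A" "a \<in> A k" "x = y(k:=a)" by auto
    then obtain p where p: "p < k" "\<forall>j<p. y j = 0" "y p = 1"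
      "\<forall>j. p < j \<and> j < k \<longrightarrow> y j \<in> A j" "\<forall>j\<ge>k. y j = 0"
      unfolding nrm_def by blast
    show ?thesis unfolding nrm_def using p y
      by (intro CollectI exI[of _ p]) (auto simp: less_Suc_eq)
  qed
qed

lemma inj_ext: "inj_on (\<lambda>(x,a). x(k:=a)) (nrm k A \<times> B)"
proof (rule inj_onI, clarify)
  fix x a y b assume "x \<in> nrm k A" "y \<in> nrm k A" "x(k:=a) = y(k:=b)"
  then show "x = y \<and> a = b"
    by (metis fun_upd_idem_iff fun_upd_upd nrm_vanish order_refl fun_upd_same)
qed

lemma ev_notin: "ev k \<notin> (\<lambda>(x,a). x(k:=a)) ` (nrm k A \<times> B)"
proof
  assume "ev k \<in> (\<lambda>(x,a). x(k:=a)) ` (nrm k A \<times> B)"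
  then obtain y a where y: "y \<in> nrm k A" "ev k = y(k:=a)" by auto
  then obtain p where p: "p < k" "y p = 1" unfolding nrm_def by blast
  have "ev k p = (0::'a)" using p by (simp add: ev_def)
  moreover have "(y(k:=a)) p = 1" using p by simp
  ultimately show False using y by simp
qed

lemma finite_nrm: "finite (nrm k (A :: nat \<Rightarrow> ('a::{finite,field}) set))"
  by (induction k) (auto simp: nrm_0 nrm_Suc)

lemma card_nrm_Suc: "card (nrm (Suc k) (A :: nat \<Rightarrow> ('a::{finite,field}) set))
    = card (nrm k A) * card (A k) + 1"
proof -
  have "card ((\<lambda>(x,a). x(k:=a)) ` (nrm k A \<times> A k)) = card (nrm k A) * card (A k)"
    by (simp add: card_image[OF inj_ext] card_cartesian_product)
  then show ?thesis unfolding nrm_Suc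
    using ev_notin[of k A "A k"] finite_nrm[of k A]
    by (simp add: card_insert_if)
qed

lemma lin_eval_upd: "lin_eval (Suc k) c (x(k:=a)) = lin_eval k c x + c k * a"
  unfolding lin_eval_def by (simp add: sum.lessThan_Suc)

lemma lin_eval_ev: "lin_eval (Suc k) c (ev k) = c k"
  unfolding lin_eval_def ev_def by (simp add: sum.lessThan_Suc)

definition NN :: "nat \<Rightarrow> (nat \<Rightarrow> ('a::field) set) \<Rightarrow> (nat \<Rightarrow> 'a) \<Rightarrow> nat" where
  "NN k A c = card {x \<in> nrm k A. lin_eval k c x \<noteq> 0}"

lemma NN_zero:
  fixes A :: "nat \<Rightarrow> ('a::{finite,field}) set"
  assumes "c k = 0"
  shows "NN (Suc k) A c = card (A k) * NN k A c"
proof -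
  have "{x \<in> nrm (Suc k) A. lin_eval (Suc k) c x \<noteq> 0}
      = (\<lambda>(x,a). x(k:=a)) ` ({x \<in> nrm k A. lin_eval k c x \<noteq> 0} \<times> A k)"
    unfolding nrm_Suc using assms by (auto simp: lin_eval_upd lin_eval_ev)
  moreover have "inj_on (\<lambda>(x,a). x(k:=a)) ({x \<in> nrm k A. lin_eval k c x \<noteq> 0} \<times> A k)"
    by (rule inj_on_subset[OF inj_ext[of k A "A k"]]) auto
  ultimately show ?thesis unfolding NN_def
    by (simp add: card_image card_cartesian_product)
qed

lemma NN_nonzero:
  fixes A :: "nat \<Rightarrow> ('a::{finite,field}) set"
  assumes "c k \<noteq> 0"
  shows "NN (Suc k) A c \<ge> card (nrm k A) * (card (A k) - 1) + 1"
proof -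
  define S where "S = Sigma (nrm k A) (\<lambda>x. {a \<in> A k. lin_eval k c x + c k * a \<noteq> 0})"
  have sub: "insert (ev k) ((\<lambda>(x,a). x(k:=a)) ` S) \<subseteq> {x \<in> nrm (Suc k) A. lin_eval (Suc k) c x \<noteq> 0}"
    unfolding nrm_Suc S_def using assms by (auto simp: lin_eval_upd lin_eval_ev)
  have inj: "inj_on (\<lambda>(x,a). x(k:=a)) S"
    by (rule inj_on_subset[OF inj_ext[of k A "A k"]]) (auto simp: S_def)
  have ni: "ev k \<notin> (\<lambda>(x,a). x(k:=a)) ` S"
    using ev_notin[of k A "A k"] by (auto simp: S_def)
  have each: "card {a \<in> A k. lin_eval k c x + c k * a \<noteq> 0} \<ge> card (A k) - 1" for x
  proof -
    have "{a \<in> A k. lin_eval k c x + c k * a \<noteq> 0} \<supseteq> A k - {- lin_eval k c x / c k}"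
    proof
      fix a assume a: "a \<in> A k - {- lin_eval k c x / c k}"
      have "lin_eval k c x + c k * a \<noteq> 0"
      proof
        assume "lin_eval k c x + c k * a = 0"
        then have "a = - lin_eval k c x / c k" using assms by (simp add: field_simps add_eq_0_iff)
        then show False using a by simp
      qed
      then show "a \<in> {a \<in> A k. lin_eval k c x + c k * a \<noteq> 0}" using a by simp
    qed
    then have "card {a \<in> A k. lin_eval k c x + c k * a \<noteq> 0} \<ge> card (A k - {- lin_eval k c x / c k})"
      by (intro card_mono) auto
    moreover have "card (A k - {- lin_eval k c x / c k}) \<ge> card (A k) - 1"
      by (metis card_Diff_singleton_if diff_le_self finite order_refl)
    ultimately show ?thesis by linarith
  qed
  have "card S = (\<Sum>x\<in>nrm k A. card {a \<in> A k. lin_eval k c x + c k * a \<noteq> 0})"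
    unfolding S_def by (rule card_SigmaI) (auto simp: finite_nrm)
  also have "\<dots> \<ge> (\<Sum>x\<in>nrm k A. card (A k) - 1)"
    by (intro sum_mono each)
  finally have cS: "card S \<ge> card (nrm k A) * (card (A k) - 1)" by simp
  have fin: "finite {x \<in> nrm (Suc k) A. lin_eval (Suc k) c x \<noteq> 0}"
    using finite_nrm[of "Suc k" A] by simp
  have "card (insert (ev k) ((\<lambda>(x,a). x(k:=a)) ` S)) = card S + 1"
    using ni inj card_image[OF inj] finite_subset[OF sub fin] by simp
  then show ?thesis unfolding NN_def using card_mono[OF fin sub] cS by linarith
qed


lemma card_nrm_1: "card (nrm (Suc 0) (A :: nat \<Rightarrow> ('a::{finite,field}) set)) = 1"
  using card_nrm_Suc[of 0 A] by (simp add: nrm_0)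

lemma Q_ineq:
  fixes A :: "nat \<Rightarrow> ('a::{finite,field}) set"
  shows "(\<forall>j<Suc m. card (A j) \<le> d) \<Longrightarrow> d \<ge> 1 \<Longrightarrow>
     card (nrm (Suc m) A) * (d - 1) + 1 \<ge> (\<Prod>j\<in>{1..<Suc m}. card (A j)) * d"
proof (induction m)
  case 0
  then show ?case by (simp add: card_nrm_1)
next
  case (Suc m)
  define M where "M = card (nrm (Suc m) A)"
  define P where "P = (\<Prod>j\<in>{1..<Suc m}. card (A j))"
  define e where "e = card (A (Suc m))"
  have IH: "M * (d - 1) + 1 \<ge> P * d" using Suc unfolding M_def P_def by simp
  have e: "e \<le> d" using Suc.prems unfolding e_def by simp
  obtain d' where d': "d = Suc d'" using Suc.prems by (cases d) auto
  have cM: "card (nrm (Suc (Suc m)) A) = M * e + 1" unfolding M_def e_def by (rule card_nrm_Suc)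
  have cP: "(\<Prod>j\<in>{1..<Suc (Suc m)}. card (A j)) = P * e"
    unfolding P_def e_def by (simp add: prod.atLeastLessThan_Suc)
  have IH': "M * d' + 1 \<ge> P * Suc d'" using IH d' by simp
  have "(M * e + 1) * d' + 1 = e * (M * d') + d' + 1" by (simp add: algebra_simps)
  also have "\<dots> \<ge> e * (P * Suc d' - 1) + Suc d'"
  proof -
    have "M * d' \<ge> P * Suc d' - 1" using IH' by linarith
    then have "e * (M * d') \<ge> e * (P * Suc d' - 1)" by simp
    then show ?thesis by simp
  qed
  finally have A1: "(M * e + 1) * d' + 1 \<ge> e * (P * Suc d' - 1) + Suc d'" .
  have "e * (P * Suc d' - 1) + Suc d' \<ge> P * e * Suc d'"
  proof (cases "P * Suc d' = 0")
    case True then show ?thesis by simp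
  next
    case False
    then have "e * (P * Suc d' - 1) = e * (P * Suc d') - e" by (simp add: right_diff_distrib')
    have g1: "P * Suc d' \<ge> 1" using False by linarith
    moreover have "e * (P * Suc d') \<ge> e * 1" using g1 by (rule mult_le_mono2)
    ultimately show ?thesis using e d' by (simp add: algebra_simps)
  qed
  then have G: "(M * e + 1) * d' + 1 \<ge> P * e * Suc d'" using A1 by linarith
  show ?case unfolding cM cP d' diff_Suc_1 by (rule G)
qed

lemma lower_bound:
  fixes A :: "nat \<Rightarrow> ('a::{finite,field}) set"
  assumes mono: "\<forall>i j. i \<le> j \<and> j < s \<longrightarrow> card (A i) \<le> card (A j)"
    and one: "\<forall>i<s. (1::'a) \<in> A i"
  shows "Suc m \<le> s \<Longrightarrow> (\<exists>i<Suc m. c i \<noteq> 0) \<Longrightarrow> NN (Suc m) A c \<ge> (\<Prod>j\<in>{1..<Suc m}. card (A j))"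
proof (induction m arbitrary: c)
  case 0
  then have "c 0 \<noteq> 0" by auto
  then show ?case using NN_nonzero[of c 0 A] by simp
next
  case (Suc m)
  show ?case
  proof (cases "c (Suc m) = 0")
    case True
    then have "\<exists>i<Suc m. c i \<noteq> 0" using Suc.prems by (metis less_antisym)
    then have "NN (Suc m) A c \<ge> (\<Prod>j\<in>{1..<Suc m}. card (A j))" using Suc by simp
    then show ?thesis using NN_zero[of c "Suc m" A, OF True] by (simp add: prod.atLeastLessThan_Suc)
  next
    case False
    have d1: "card (A (Suc m)) \<ge> 1"
      using one Suc.prems by (metis Suc_le_eq card_0_eq finite less_one not_less_eq_eq empty_iff)
    have "\<forall>j<Suc m. card (A j) \<le> card (A (Suc m))" using mono Suc.prems by auto
    from Q_ineq[OF this d1] NN_nonzero[of c "Suc m" A, OF False]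
    show ?thesis by (simp add: prod.atLeastLessThan_Suc mult.commute)
  qed
qed

lemma NN_ev0:
  fixes A :: "nat \<Rightarrow> ('a::{finite,field}) set"
  shows "NN (Suc m) A (ev 0) = (\<Prod>j\<in>{1..<Suc m}. card (A j))"
proof (induction m)
  case 0
  have "nrm (Suc 0) A = {ev 0}" by (simp add: nrm_Suc nrm_0)
  moreover have "lin_eval (Suc 0) (ev 0) (ev 0) = (1::'a)"
    using lin_eval_ev[of 0 "ev 0"] by (simp add: ev_def)
  ultimately have "{x \<in> nrm (Suc 0) A. lin_eval (Suc 0) (ev 0) x \<noteq> 0} = {ev 0}" by auto
  then show ?case by (simp add: NN_def)
next
  case (Suc m)
  have "ev 0 (Suc m) = (0::'a)" by (simp add: ev_def)
  from NN_zero[of "ev 0" "Suc m" A, OF this] Suc show ?case by (simp add: prod.atLeastLessThan_Suc mult.commute)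
qed


lemma proj_point_scale:
  fixes y :: "nat \<Rightarrow> 'a::field"
  assumes "k \<noteq> 0"
  shows "proj_point (\<lambda>i. k * y i) = proj_point y"
  unfolding proj_point_def
proof (intro equalityI subsetI)
  fix z assume "z \<in> {\<lambda>i. c * (k * y i) |c. c \<noteq> 0}"
  then obtain c where "c \<noteq> 0" "z = (\<lambda>i. c * (k * y i))" by auto
  then show "z \<in> {\<lambda>i. c * y i |c. c \<noteq> 0}" using assms
    by (intro CollectI exI[of _ "c * k"]) (auto simp: mult.assoc)
next
  fix z assume "z \<in> {\<lambda>i. c * y i |c. c \<noteq> 0}"
  then obtain c where "c \<noteq> 0" "z = (\<lambda>i. c * y i)" by auto
  then show "z \<in> {\<lambda>i. c * (k * y i) |c. c \<noteq> 0}" using assms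
    by (intro CollectI exI[of _ "c / k"]) auto
qed

lemma lin_eval_scale: "lin_eval s c (\<lambda>i. k * x i) = k * lin_eval s c x"
  unfolding lin_eval_def by (simp add: sum_distrib_left algebra_simps)

lemma self_in0: "x \<in> proj_point x"
  unfolding proj_point_def by (intro CollectI exI[of _ 1]) simp

lemma proj_point_zero: "(\<forall>z\<in>proj_point x. lin_eval s c z = 0) \<longleftrightarrow> lin_eval s c x = 0"
proof
  assume "\<forall>z\<in>proj_point x. lin_eval s c z = 0"
  moreover have "x \<in> proj_point x" by (rule self_in0)
  ultimately show "lin_eval s c x = 0" by blast
next
  assume "lin_eval s c x = 0"
  then show "\<forall>z\<in>proj_point x. lin_eval s c z = 0"
    unfolding proj_point_def by (auto simp: lin_eval_scale)
qed

lemma self_in: "x \<in> proj_point x"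
  unfolding proj_point_def by (intro CollectI exI[of _ 1]) simp

lemma inj_proj: "inj_on proj_point (nrm s A)"
proof (rule inj_onI)
  fix x y assume x: "x \<in> nrm s A" and y: "y \<in> nrm s A" and eq: "proj_point x = proj_point y"
  have "x \<in> proj_point y" using eq self_in[of x] by simp
  then obtain c where c: "c \<noteq> 0" "x = (\<lambda>i. c * y i)" unfolding proj_point_def by auto
  obtain p where p: "\<forall>j<p. x j = 0" "x p = 1" using x unfolding nrm_def by blast
  obtain q where q: "\<forall>j<q. y j = 0" "y q = 1" using y unfolding nrm_def by blast
  have xe: "x j = c * y j" for j using c(2) by simp
  have "\<not> p < q"
  proof
    assume "p < q"
    then have "y p = 0" using q by simp
    then show False using xe[of p] p(2) by simp
  qed
  moreover have "\<not> q < p"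
  proof
    assume "q < p"
    then have "x q = 0" using p by simp
    then show False using xe[of q] q(2) c(1) by simp
  qed
  ultimately have "p = q" by simp
  then have "c = 1" using xe[of p] p q by simp
  then show "x = y" using c by simp
qed

lemma X_eq:
  assumes "proj_nested_cartesian s A"
  shows "proj_cart_set s A = proj_point ` nrm s A"
proof -
  have z: "\<forall>i<s. 0 \<in> A i" and o: "\<forall>i<s. 1 \<in> A i"
    and nest: "\<forall>i j. i < j \<and> j < s \<longrightarrow> (\<forall>a\<in>A j. \<forall>b\<in>A i. b \<noteq> 0 \<longrightarrow> a / b \<in> A j)"
    using assms unfolding proj_nested_cartesian_def by auto
  have sub: "nrm s A \<subseteq> {x. (\<forall>i<s. x i \<in> A i) \<and> (\<forall>i\<ge>s. x i = 0) \<and> x \<noteq> (\<lambda>i. 0)}"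
  proof
    fix x assume "x \<in> nrm s A"
    then obtain p where p: "p < s" "\<forall>j<p. x j = 0" "x p = 1" "\<forall>j. p < j \<and> j < s \<longrightarrow> x j \<in> A j"
      "\<forall>j\<ge>s. x j = 0" unfolding nrm_def by blast
    have "\<forall>i<s. x i \<in> A i"
    proof (intro allI impI)
      fix i assume "i < s"
      then show "x i \<in> A i" using p z o by (cases "i < p"; cases "i = p") auto
    qed
    moreover have "x \<noteq> (\<lambda>i. 0)" using p(3) by (metis one_neq_zero)
    ultimately show "x \<in> {x. (\<forall>i<s. x i \<in> A i) \<and> (\<forall>i\<ge>s. x i = 0) \<and> x \<noteq> (\<lambda>i. 0)}"
      using p by blast
  qed
  have sup: "proj_point x \<in> proj_point ` nrm s A"
    if x: "\<forall>i<s. x i \<in> A i" "\<forall>i\<ge>s. x i = 0" "x \<noteq> (\<lambda>i. 0)" for x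
  proof -
    obtain i0 where i0: "x i0 \<noteq> 0" using x(3) by auto
    define p where "p = (LEAST i. x i \<noteq> 0)"
    have xp: "x p \<noteq> 0" unfolding p_def by (rule LeastI[of _ i0]) (rule i0)
    have below: "\<forall>j<p. x j = 0" unfolding p_def using not_less_Least by blast
    have ps: "p < s" using xp x(2) by (meson not_less)
    define y where "y = (\<lambda>i. x i / x p)"
    have "y \<in> nrm s A" unfolding nrm_def
    proof (intro CollectI exI[of _ p] conjI allI impI)
      show "p < s" by (rule ps)
      show "y j = 0" if "j < p" for j using below that by (simp add: y_def)
      show "y p = 1" using xp by (simp add: y_def)
      show "y j \<in> A j" if "p < j \<and> j < s" for j
        using nest that x(1) ps xp unfolding y_def by auto
      show "y j = 0" if "s \<le> j" for j using x(2) that by (simp add: y_def)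
    qed
    moreover have "x = (\<lambda>i. x p * y i)" using xp by (simp add: y_def)
    then have "proj_point x = proj_point y" using proj_point_scale[OF xp, of y] by simp
    ultimately show ?thesis by blast
  qed
  show ?thesis unfolding proj_cart_set_def using sub sup by blast
qed

lemma img_filter: "{P \<in> f ` N. Q P} = f ` {x \<in> N. Q (f x)}" by auto
lemma diff_filter: "X - {P \<in> X. R P} = {P \<in> X. \<not> R P}" by auto
lemma nvan_img: "(\<not> (\<forall>P\<in>f ` N. Q P)) \<longleftrightarrow> (\<exists>x\<in>N. \<not> Q (f x))" by auto

theorem proposition6p8:
  fixes s :: nat and A :: "nat \<Rightarrow> ('a::{finite,field}) set"
  assumes "s \<ge> 1"
    and "proj_nested_cartesian s A"
  shows "delta1 s (proj_cart_set s A) TYPE('a) = (\<Prod>i\<in>{1..<s}. card (A i))"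
proof -
  obtain m where sm: "s = Suc m" using assms(1) by (cases s) auto
  define X where "X = proj_cart_set s A"
  have Xeq: "X = proj_point ` nrm s A" unfolding X_def by (rule X_eq[OF assms(2)])
  have finX: "finite X" unfolding Xeq by (simp add: finite_nrm)
  have key: "card X - card (zero_set_lin s X c) = NN s A c" for c
  proof -
    have Zs: "zero_set_lin s X c \<subseteq> X" unfolding zero_set_lin_def by auto
    have "X - zero_set_lin s X c = {P \<in> proj_point ` nrm s A. \<not> (\<forall>z\<in>P. lin_eval s c z = 0)}"
      unfolding zero_set_lin_def Xeq by (rule diff_filter)
    also have "\<dots> = proj_point ` {x \<in> nrm s A. \<not> (\<forall>z\<in>proj_point x. lin_eval s c z = 0)}"
      by (rule img_filter)
    also have "\<dots> = proj_point ` {x \<in> nrm s A. lin_eval s c x \<noteq> 0}"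
      by (simp only: proj_point_zero)
    finally have "X - zero_set_lin s X c = proj_point ` {x \<in> nrm s A. lin_eval s c x \<noteq> 0}" .
    moreover have "card (proj_point ` {x \<in> nrm s A. lin_eval s c x \<noteq> 0}) = NN s A c"
      unfolding NN_def by (rule card_image) (rule inj_on_subset[OF inj_proj], auto)
    ultimately show ?thesis using card_Diff_subset[OF finite_subset[OF Zs finX] Zs] by simp
  qed
  have nv: "\<not> in_vanishing_ideal_lin s X c \<longleftrightarrow> (\<exists>x\<in>nrm s A. lin_eval s c x \<noteq> 0)" for c
  proof -
    have "\<not> in_vanishing_ideal_lin s X c \<longleftrightarrow> (\<exists>x\<in>nrm s A. \<not> (\<forall>z\<in>proj_point x. lin_eval s c z = 0))"
      unfolding in_vanishing_ideal_lin_def Xeq by (rule nvan_img)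
    then show ?thesis by (simp only: proj_point_zero)
  qed
  define S where "S = {card X - card (zero_set_lin s X c) | c :: nat \<Rightarrow> 'a.
                          \<not> in_vanishing_ideal_lin s X c}"
  have finS: "finite S"
    by (rule finite_subset[of _ "{..card X}"]) (auto simp: S_def)
  have zz: "\<forall>i<s. (0::'a) \<in> A i" using assms(2) unfolding proj_nested_cartesian_def by auto
  have ev0in: "ev 0 \<in> nrm s A" using sm zz unfolding nrm_def ev_def
    by (intro CollectI exI[of _ 0]) auto
  have ee: "(\<lambda>i. ev 0 i * ev 0 i) = (\<lambda>i. if i = 0 then (1::'a) else 0)"
    by (auto simp: ev_def)
  have "lin_eval s (ev 0) (ev 0) = (1::'a)" unfolding lin_eval_def ee using sm
    by simp
  then have ex0: "\<exists>x\<in>nrm s A. lin_eval s (ev 0) x \<noteq> 0" using ev0in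
    by (intro bexI[of _ "ev 0"]) simp_all
  have inS: "NN s A (ev 0) \<in> S" unfolding S_def key nv
    by (intro CollectI exI[of _ "ev 0"] conjI refl ex0)
  have NNv: "NN s A (ev 0) = (\<Prod>i\<in>{1..<s}. card (A i))" unfolding sm by (rule NN_ev0)
  have mono: "\<forall>i j. i \<le> j \<and> j < s \<longrightarrow> card (A i) \<le> card (A j)"
    and one: "\<forall>i<s. (1::'a) \<in> A i"
    using assms(2) unfolding proj_nested_cartesian_def by auto
  have bound: "(\<Prod>i\<in>{1..<s}. card (A i)) \<le> y" if yS: "y \<in> S" for y
  proof -
    have "y \<in> {NN s A c | c. \<exists>x\<in>nrm s A. lin_eval s c x \<noteq> 0}"
      using yS unfolding S_def key nv .
    then obtain c where c1: "y = NN s A c" and c2: "\<exists>x\<in>nrm s A. lin_eval s c x \<noteq> 0"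
      by blast
    have ex: "\<exists>i<Suc m. c i \<noteq> 0"
    proof (rule ccontr)
      assume "\<not> (\<exists>i<Suc m. c i \<noteq> 0)"
      then have "lin_eval s c x = 0" for x unfolding lin_eval_def sm by simp
      then show False using c2 by blast
    qed
    have "Suc m \<le> s" using sm by simp
    from lower_bound[OF mono one this ex]
    have "NN (Suc m) A c \<ge> (\<Prod>j\<in>{1..<Suc m}. card (A j))" .
    then show ?thesis unfolding c1 sm .
  qed
  have "Min S = (\<Prod>i\<in>{1..<s}. card (A i))"
    by (rule Min_eqI[OF finS]) (rule bound, assumption, use inS NNv in simp)
  then show ?thesis unfolding delta1_def S_def X_def .
qed

end
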